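(* Under the assumptions of Theorem 2 (the case $\varepsilon=0$), let $(u,v)$ be a classical solution on $[0,T)$ with $u>0$. Then $\int_0^1 v(x,t)\,dx=\overline v:=\int_0^1 v_0(x)\,dx$ for all $t\in[0,T)$, and there exists $C>0$ independent of $t$ and $T$ such that for all $t\in[0,T)$ \[ E(u,\alpha)(t)+\|(v-\overline v)(t)\|^2+\int_0^t\!\!\int_0^1\frac{(u_x)^2}{u}\,dx\,d\tau\le C . \]
   Context: Setting of Theorem 2: on $(0,1)\times(0,\infty)$, $u_t-(uv)_x=u_{xx}$, $v_t-u_x=0$, $(u,v)(x,0)=(u_0,v_0)(x)$, $u(0,t)=u(1,t)=\alpha(t)$ (no boundary condition on $v$); $u_0>0$, $(u_0,v_0)\in[H^2((0,1))]^2$ compatible with the boundary data; $\alpha$ smooth on $[0,\infty)$ with $\alpha\ge\underline\alpha>0$ and $\alpha'\in W^{1,1}(\mathbb{R}_+)$. The relative entropy is $E(u,\alpha)(t)=\int_0^1\big[(u\ln u-u)-(\alpha\ln\alpha-\alpha)-(u-\alpha)\ln\alpha\big]dx$. $\|\cdot\|$ is the $L^2((0,1))$ norm. *)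

theory Defs
  imports "HOL-Analysis.Analysis"
begin

definition test_fun01 :: "(real \<Rightarrow> real) \<Rightarrow> bool" where
  "test_fun01 \<phi> \<longleftrightarrow>
     (\<forall>k x. ((deriv ^^ k) \<phi>) differentiable (at x)) \<and>
     (\<exists>a b. 0 < a \<and> a \<le> b \<and> b < 1 \<and> (\<forall>x. x \<notin> {a..b} \<longrightarrow> \<phi> x = 0))"

definition L2_01 :: "(real \<Rightarrow> real) \<Rightarrow> bool" where
  "L2_01 f \<longleftrightarrow> set_borel_measurable lborel {0<..<1} f \<and>
                 set_integrable lborel {0<..<1} (\<lambda>x. (f x)\<^sup>2)"

definition weak_deriv01 :: "(real \<Rightarrow> real) \<Rightarrow> (real \<Rightarrow> real) \<Rightarrow> bool" where
  "weak_deriv01 f g \<longleftrightarrow>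
     (\<forall>\<phi>. test_fun01 \<phi> \<longrightarrow>
        (LBINT x:{0<..<1}. f x * deriv \<phi> x) = - (LBINT x:{0<..<1}. g x * \<phi> x))"

definition H2_01 :: "(real \<Rightarrow> real) \<Rightarrow> bool" where
  "H2_01 f \<longleftrightarrow> (\<exists>g1 g2. L2_01 f \<and> L2_01 g1 \<and> L2_01 g2 \<and>
                          weak_deriv01 f g1 \<and> weak_deriv01 g1 g2)"

text \<open>Classical solution on [0,1] x [0,T) of
  u_t - (u v)_x = u_xx,  v_t - u_x = 0,  (u,v)(x,0) = (u0,v0)(x),  u(0,t) = u(1,t) = alpha(t).
  Functions are written u x t.  Regularity: u, v continuous on [0,1] x [0,T);
  u_x, u_xx, u_t, v_x, v_t exist and are continuous on [0,1] x (0,T).\<close>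
definition classical_solution ::
  "real \<Rightarrow> (real \<Rightarrow> real) \<Rightarrow> (real \<Rightarrow> real) \<Rightarrow> (real \<Rightarrow> real) \<Rightarrow>
   (real \<Rightarrow> real \<Rightarrow> real) \<Rightarrow> (real \<Rightarrow> real \<Rightarrow> real) \<Rightarrow> bool" where
  "classical_solution T u0 v0 \<alpha> u v \<longleftrightarrow>
     continuous_on ({0..1} \<times> {0..<T}) (\<lambda>(x,t). u x t) \<and>
     continuous_on ({0..1} \<times> {0..<T}) (\<lambda>(x,t). v x t) \<and>
     (\<exists>ux uxx ut vx vt.
        (\<forall>x\<in>{0..1}. \<forall>t\<in>{0<..<T}.
           ((\<lambda>y. u y t) has_real_derivative ux x t) (at x within {0..1}) \<and>
           ((\<lambda>y. ux y t) has_real_derivative uxx x t) (at x within {0..1}) \<and>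
           ((\<lambda>s. u x s) has_real_derivative ut x t) (at t) \<and>
           ((\<lambda>y. v y t) has_real_derivative vx x t) (at x within {0..1}) \<and>
           ((\<lambda>s. v x s) has_real_derivative vt x t) (at t)) \<and>
        continuous_on ({0..1} \<times> {0<..<T}) (\<lambda>(x,t). ux x t) \<and>
        continuous_on ({0..1} \<times> {0<..<T}) (\<lambda>(x,t). uxx x t) \<and>
        continuous_on ({0..1} \<times> {0<..<T}) (\<lambda>(x,t). ut x t) \<and>
        continuous_on ({0..1} \<times> {0<..<T}) (\<lambda>(x,t). vx x t) \<and>
        continuous_on ({0..1} \<times> {0<..<T}) (\<lambda>(x,t). vt x t) \<and>
        (\<forall>x\<in>{0<..<1}. \<forall>t\<in>{0<..<T}.
           ut x t - (ux x t * v x t + u x t * vx x t) = uxx x t \<and>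
           vt x t - ux x t = 0)) \<and>
     (\<forall>x\<in>{0..1}. u x 0 = u0 x \<and> v x 0 = v0 x) \<and>
     (\<forall>t\<in>{0..<T}. u 0 t = \<alpha> t \<and> u 1 t = \<alpha> t)"

definition rel_entropy :: "(real \<Rightarrow> real) \<Rightarrow> real \<Rightarrow> real" where
  "rel_entropy w a = (LBINT x:{0..1}.
     (w x * ln (w x) - w x) - (a * ln a - a) - (w x - a) * ln a)"

definition L2norm_sq01 :: "(real \<Rightarrow> real) \<Rightarrow> real" where
  "L2norm_sq01 f = (LBINT x:{0..1}. (f x)\<^sup>2)"

end

theory Submission
  imports Defs
begin

lemma lbint_cont:
  fixes f :: "real \<Rightarrow> real"
  assumes "continuous_on {a..b} f"
  shows "(LBINT x:{a..b}. f x) = integral {a..b} f"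
  by (rule set_borel_integral_eq_integral(2)[OF borel_integrable_atLeastAtMost'[OF assms]])

lemma cont_swap:
  fixes f :: "'a::topological_space \<Rightarrow> 'b::topological_space \<Rightarrow> 'c::topological_space"
  assumes "continuous_on (A \<times> B) (\<lambda>(x,t). f x t)"
  shows "continuous_on (B \<times> A) (\<lambda>p. f (snd p) (fst p))"
proof -
  have "continuous_on (B \<times> A) (\<lambda>p. (snd p, fst p))"
    by (intro continuous_intros)
  moreover have "(\<lambda>p. (snd p, fst p)) ` (B \<times> A) \<subseteq> A \<times> B" by auto
  ultimately have "continuous_on (B \<times> A) ((\<lambda>(x,t). f x t) \<circ> (\<lambda>p. (snd p, fst p)))"
    using continuous_on_compose continuous_on_subset assms by blast
  thus ?thesis by (simp add: o_def)
qed

lemma cont_slice: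
  fixes f :: "real \<Rightarrow> real \<Rightarrow> real"
  assumes "continuous_on (B \<times> A) (\<lambda>p. f (snd p) (fst p))" "t \<in> B"
  shows "continuous_on A (\<lambda>x. f x t)"
proof -
  have "continuous_on A (\<lambda>x. (t, x))" by (intro continuous_intros)
  moreover have "(\<lambda>x. (t,x)) ` A \<subseteq> B \<times> A" using assms(2) by auto
  ultimately have "continuous_on A ((\<lambda>p. f (snd p) (fst p)) \<circ> (\<lambda>x. (t,x)))"
    using continuous_on_compose continuous_on_subset assms(1) by blast
  thus ?thesis by (simp add: o_def)
qed

lemma cont_fst:
  fixes g :: "real \<Rightarrow> real"
  assumes "continuous_on S g" "B \<subseteq> S"
  shows "continuous_on (B \<times> A) (\<lambda>p. g (fst p))"
proof -
  have "fst ` (B \<times> A) \<subseteq> S" using assms(2) by auto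
  thus ?thesis
    by (rule continuous_on_compose2[OF assms(1) continuous_on_fst[OF continuous_on_id]])
qed

lemma leib:
  fixes f fx :: "real \<Rightarrow> real \<Rightarrow> real"
  assumes U: "open U" "convex U" "t0 \<in> U"
  and d: "\<And>t x. t \<in> U \<Longrightarrow> x \<in> {0..1} \<Longrightarrow> ((\<lambda>t. f t x) has_real_derivative fx t x) (at t)"
  and c: "\<And>t. t \<in> U \<Longrightarrow> continuous_on {0..1} (f t)"
  and cx: "continuous_on (U \<times> {0..1}) (\<lambda>p. fx (fst p) (snd p))"
  shows "((\<lambda>t. integral {0..1} (f t)) has_real_derivative integral {0..1} (fx t0)) (at t0)"
proof -
  have "((\<lambda>t. integral (cbox 0 1) (f t)) has_real_derivative integral (cbox 0 1) (fx t0)) (at t0 within U)"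
    apply (rule leibniz_rule_field_derivative)
    using d c cx U by (auto intro: has_field_derivative_at_within integrable_continuous_real simp: case_prod_unfold)
  thus ?thesis using U at_within_open[of t0 U] by (simp add: cbox_interval)
qed

lemma key_ineq:
  fixes w a :: real
  assumes "w > 0" "a > 0"
  shows "0 \<le> w * (ln w - ln a) - w + a"
    and "\<bar>w - a\<bar> \<le> (w * ln w - w) - (a * ln a - a) - (w - a) * ln a + exp 2 * a"
proof -
  have l: "ln (a/w) \<le> a/w - 1" using assms by (intro ln_le_minus_one) simp
  have "ln (a/w) = ln a - ln w" using assms by (simp add: ln_div)
  hence "w * (ln w - ln a) \<ge> w * (1 - a/w)" using l assms by (intro mult_left_mono) auto
  moreover have "w * (1 - a/w) = w - a" using assms by (simp add: field_simps)
  ultimately have e0: "w * (ln w - ln a) \<ge> w - a" by simp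
  thus "0 \<le> w * (ln w - ln a) - w + a" by simp
  have eq: "(w * ln w - w) - (a * ln a - a) - (w - a) * ln a = w * (ln w - ln a) - w + a"
    by (simp add: algebra_simps)
  have ex: "exp 2 \<ge> (1::real)" by simp
  show "\<bar>w - a\<bar> \<le> (w * ln w - w) - (a * ln a - a) - (w - a) * ln a + exp 2 * a"
  proof (cases "w \<le> exp 2 * a")
    case True
    have "a \<le> exp 2 * a" using ex assms by simp
    hence "\<bar>w - a\<bar> \<le> exp 2 * a" using True assms by linarith
    thus ?thesis using e0 eq by linarith
  next
    case False
    hence "ln w \<ge> ln (exp 2 * a)" using assms by simp
    hence "ln w \<ge> 2 + ln a" using assms by (simp add: ln_mult)
    hence "w * (ln w - ln a) \<ge> w * 2" using assms by (intro mult_left_mono) auto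
    moreover have "exp 2 * a \<ge> 0" using assms by simp
    ultimately show ?thesis using assms eq by linarith
  qed
qed


locale sol =
  fixes T :: real and u v ux uxx ut vx vt :: "real \<Rightarrow> real \<Rightarrow> real"
    and a0 a1 :: "real \<Rightarrow> real" and alow c :: real
  assumes cu: "continuous_on ({0..1} \<times> {0..<T}) (\<lambda>(x,t). u x t)"
    and cv: "continuous_on ({0..1} \<times> {0..<T}) (\<lambda>(x,t). v x t)"
    and ders: "\<forall>x\<in>{0..1}. \<forall>t\<in>{0<..<T}.
           ((\<lambda>y. u y t) has_real_derivative ux x t) (at x within {0..1}) \<and>
           ((\<lambda>y. ux y t) has_real_derivative uxx x t) (at x within {0..1}) \<and>
           ((\<lambda>s. u x s) has_real_derivative ut x t) (at t) \<and>
           ((\<lambda>y. v y t) has_real_derivative vx x t) (at x within {0..1}) \<and>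
           ((\<lambda>s. v x s) has_real_derivative vt x t) (at t)"
    and cux: "continuous_on ({0..1} \<times> {0<..<T}) (\<lambda>(x,t). ux x t)"
    and cuxx: "continuous_on ({0..1} \<times> {0<..<T}) (\<lambda>(x,t). uxx x t)"
    and cut: "continuous_on ({0..1} \<times> {0<..<T}) (\<lambda>(x,t). ut x t)"
    and cvx: "continuous_on ({0..1} \<times> {0<..<T}) (\<lambda>(x,t). vx x t)"
    and cvt: "continuous_on ({0..1} \<times> {0<..<T}) (\<lambda>(x,t). vt x t)"
    and pde: "\<forall>x\<in>{0<..<1}. \<forall>t\<in>{0<..<T}.
           ut x t - (ux x t * v x t + u x t * vx x t) = uxx x t \<and> vt x t - ux x t = 0"
    and bd: "\<forall>t\<in>{0..<T}. u 0 t = a0 t \<and> u 1 t = a0 t"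
    and upos: "\<forall>x\<in>{0..1}. \<forall>t\<in>{0..<T}. u x t > 0"
    and a0d: "\<forall>t\<ge>0. (a0 has_real_derivative a1 t) (at t within {0..})"
    and a1c: "continuous_on {0..} a1"
    and alow: "alow > 0" "\<forall>t\<ge>0. a0 t \<ge> alow"
begin

lemma a0c: "continuous_on {0..} a0"
proof (rule DERIV_continuous_on[where D=a1])
  fix x :: real assume "x \<in> {0..}"
  hence "x \<ge> 0" by simp
  thus "(a0 has_real_derivative a1 x) (at x within {0..})" using a0d by blast
qed

lemma a0at: "t > 0 \<Longrightarrow> (a0 has_real_derivative a1 t) (at t)"
proof -
  assume t: "t > 0"
  have h: "(a0 has_real_derivative a1 t) (at t within {0..})" using a0d t by simp
  have "(a0 has_real_derivative a1 t) (at t within {0<..})"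
    by (rule DERIV_subset[OF h]) auto
  thus ?thesis using at_within_open[of t "{0<..}"] t by simp
qed

lemma a0pos: "t \<ge> 0 \<Longrightarrow> a0 t > 0"
proof -
  assume "t \<ge> 0"
  hence "alow \<le> a0 t" using alow(2) by blast
  thus ?thesis using alow(1) by linarith
qed

abbreviation "U \<equiv> {0<..<T}"

lemma J0: "continuous_on ({0..<T} \<times> {0..1}) (\<lambda>p. u (snd p) (fst p))"
          "continuous_on ({0..<T} \<times> {0..1}) (\<lambda>p. v (snd p) (fst p))"
  using cont_swap[OF cu] cont_swap[OF cv] by auto

lemma J: "continuous_on (U \<times> {0..1}) (\<lambda>p. u (snd p) (fst p))"
         "continuous_on (U \<times> {0..1}) (\<lambda>p. v (snd p) (fst p))"
         "continuous_on (U \<times> {0..1}) (\<lambda>p. ux (snd p) (fst p))"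
         "continuous_on (U \<times> {0..1}) (\<lambda>p. uxx (snd p) (fst p))"
         "continuous_on (U \<times> {0..1}) (\<lambda>p. ut (snd p) (fst p))"
         "continuous_on (U \<times> {0..1}) (\<lambda>p. vx (snd p) (fst p))"
         "continuous_on (U \<times> {0..1}) (\<lambda>p. vt (snd p) (fst p))"
         "continuous_on (U \<times> {0..1}) (\<lambda>p. a0 (fst p))"
         "continuous_on (U \<times> {0..1}) (\<lambda>p. a1 (fst p))"
  subgoal by (rule continuous_on_subset[OF J0(1)]) auto
  subgoal by (rule continuous_on_subset[OF J0(2)]) auto
  subgoal by (rule cont_swap[OF cux])
  subgoal by (rule cont_swap[OF cuxx])
  subgoal by (rule cont_swap[OF cut])
  subgoal by (rule cont_swap[OF cvx])
  subgoal by (rule cont_swap[OF cvt])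
  subgoal by (rule cont_fst[OF a0c]) auto
  subgoal by (rule cont_fst[OF a1c]) auto
  done

lemma S0: "t \<in> {0..<T} \<Longrightarrow> continuous_on {0..1} (\<lambda>x. u x t)"
          "t \<in> {0..<T} \<Longrightarrow> continuous_on {0..1} (\<lambda>x. v x t)"
  subgoal by (rule cont_slice[OF J0(1)])
  subgoal by (rule cont_slice[OF J0(2)])
  done

lemma S: "t \<in> U \<Longrightarrow> continuous_on {0..1} (\<lambda>x. ux x t)"
         "t \<in> U \<Longrightarrow> continuous_on {0..1} (\<lambda>x. uxx x t)"
         "t \<in> U \<Longrightarrow> continuous_on {0..1} (\<lambda>x. ut x t)"
         "t \<in> U \<Longrightarrow> continuous_on {0..1} (\<lambda>x. vx x t)"
         "t \<in> U \<Longrightarrow> continuous_on {0..1} (\<lambda>x. vt x t)"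
  subgoal by (rule cont_slice[OF J(3)])
  subgoal by (rule cont_slice[OF J(4)])
  subgoal by (rule cont_slice[OF J(5)])
  subgoal by (rule cont_slice[OF J(6)])
  subgoal by (rule cont_slice[OF J(7)])
  done

end


context sol begin

definition F :: "real \<Rightarrow> real \<Rightarrow> real" where
  "F t x = ((u x t * ln (u x t) - u x t) - (a0 t * ln (a0 t) - a0 t) - (u x t - a0 t) * ln (a0 t))
           + (v x t - c)\<^sup>2 / 2"

definition Fd :: "real \<Rightarrow> real \<Rightarrow> real" where
  "Fd t x = ut x t * (ln (u x t) - ln (a0 t)) - (u x t - a0 t) * (a1 t / a0 t) + (v x t - c) * vt x t"

lemma dF:
  assumes t: "t \<in> U" and x: "x \<in> {0..1}"
  shows "((\<lambda>s. F s x) has_real_derivative Fd t x) (at t)"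
proof -
  have hu: "((\<lambda>s. u x s) has_real_derivative ut x t) (at t)" using ders t x by blast
  have hv: "((\<lambda>s. v x s) has_real_derivative vt x t) (at t)" using ders t x by blast
  have ha: "(a0 has_real_derivative a1 t) (at t)" using a0at t by simp
  have up: "u x t > 0" using upos t x by simp
  have ap: "a0 t > 0" using a0pos t by simp
  show ?thesis unfolding F_def[abs_def] Fd_def
    apply (rule derivative_eq_intros hu hv ha refl up ap)+
      apply simp
     apply (rule refl)
    using up ap by (simp add: field_simps)
qed

lemma upos': "t \<in> {0..<T} \<Longrightarrow> x \<in> {0..1} \<Longrightarrow> u x t > 0"
  using upos by blast

lemma cF: assumes t: "t \<in> {0..<T}" shows "continuous_on {0..1} (F t)"
proof -
  have ap: "a0 t > 0" using a0pos t by simp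
  have nz: "\<forall>x\<in>{0..1}. u x t \<noteq> 0" using upos' t by force
  show ?thesis unfolding F_def[abs_def]
    by (intro continuous_intros S0[OF t] nz) simp
qed

lemma genF:
  fixes f1 f2 f3 :: "'a::topological_space \<Rightarrow> real"
  assumes "continuous_on S f1" "continuous_on S f2" "continuous_on S f3"
    "\<forall>p\<in>S. f1 p \<noteq> 0" "\<forall>p\<in>S. f3 p \<noteq> 0"
  shows "continuous_on S (\<lambda>p. ((f1 p * ln (f1 p) - f1 p) - (f3 p * ln (f3 p) - f3 p)
           - (f1 p - f3 p) * ln (f3 p)) + (f2 p - c)\<^sup>2 / 2)"
  by (intro continuous_intros assms) simp

lemma genFd:
  fixes f1 f2 f3 f4 f5 f6 :: "'a::topological_space \<Rightarrow> real"
  assumes "continuous_on S f1" "continuous_on S f2" "continuous_on S f3"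
    "continuous_on S f4" "continuous_on S f5" "continuous_on S f6"
    "\<forall>p\<in>S. f1 p \<noteq> 0" "\<forall>p\<in>S. f3 p \<noteq> 0"
  shows "continuous_on S (\<lambda>p. f4 p * (ln (f1 p) - ln (f3 p)) - (f1 p - f3 p) * (f6 p / f3 p)
           + (f2 p - c) * f5 p)"
  by (intro continuous_intros assms)

lemma JF: "continuous_on ({0..<T} \<times> {0..1}) (\<lambda>p. F (fst p) (snd p))"
proof -
  have ca: "continuous_on ({0..<T} \<times> {0..1::real}) (\<lambda>p. a0 (fst p))"
    by (rule cont_fst[OF a0c]) (simp add: subset_eq)
  have nz: "\<forall>p\<in>{0..<T} \<times> {0..1}. u (snd p) (fst p) \<noteq> 0"
  proof
    fix p :: "real \<times> real" assume "p \<in> {0..<T} \<times> {0..1}"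
    hence "fst p \<in> {0..<T}" "snd p \<in> {0..1}" by (simp_all add: mem_Times_iff)
    hence "u (snd p) (fst p) > 0" by (rule upos')
    thus "u (snd p) (fst p) \<noteq> 0" by simp
  qed
  have nza: "\<forall>p\<in>{0..<T} \<times> {0..1::real}. a0 (fst p) \<noteq> 0"
  proof
    fix p :: "real \<times> real" assume "p \<in> {0..<T} \<times> {0..1}"
    hence "fst p \<ge> 0" by (simp add: mem_Times_iff)
    hence "a0 (fst p) > 0" by (rule a0pos)
    thus "a0 (fst p) \<noteq> 0" by simp
  qed
  show ?thesis unfolding F_def
    by (rule genF[OF J0(1) J0(2) ca nz nza])
qed

lemma JFd: "continuous_on (U \<times> {0..1}) (\<lambda>p. Fd (fst p) (snd p))"
proof -
  have nz: "\<forall>p\<in>U \<times> {0..1}. u (snd p) (fst p) \<noteq> 0"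
  proof
    fix p :: "real \<times> real" assume "p \<in> U \<times> {0..1}"
    hence "fst p \<in> {0..<T}" "snd p \<in> {0..1}" by (simp_all add: mem_Times_iff)
    hence "u (snd p) (fst p) > 0" by (rule upos')
    thus "u (snd p) (fst p) \<noteq> 0" by simp
  qed
  have nza: "\<forall>p\<in>U \<times> {0..1::real}. a0 (fst p) \<noteq> 0"
  proof
    fix p :: "real \<times> real" assume "p \<in> U \<times> {0..1}"
    hence "fst p \<ge> 0" by (simp add: mem_Times_iff)
    hence "a0 (fst p) > 0" by (rule a0pos)
    thus "a0 (fst p) \<noteq> 0" by simp
  qed
  show ?thesis unfolding Fd_def
    by (rule genFd[OF J(1) J(2) J(8) J(5) J(7) J(9) nz nza])
qed

definition G :: "real \<Rightarrow> real" where "G t = integral {0..1} (F t)"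

lemma Gd: assumes t: "t \<in> U" shows "(G has_real_derivative integral {0..1} (Fd t)) (at t)"
  unfolding G_def[abs_def]
proof (rule leib)
  show "open U" by simp
  show "convex U" by simp
  show "t \<in> U" by (rule t)
  show "((\<lambda>t. F t x) has_real_derivative Fd s x) (at s)" if "s \<in> U" "x \<in> {0..1}" for s x
    using dF that by blast
  show "continuous_on {0..1} (F s)" if "s \<in> U" for s using cF that by simp
  show "continuous_on (U \<times> {0..1}) (\<lambda>p. Fd (fst p) (snd p))" by (rule JFd)
qed

lemma Gc: "continuous_on {0..<T} G"
proof -
  have "continuous_on {0..<T} (\<lambda>t. integral (cbox 0 1) (F t))"
    by (rule integral_continuous_on_param) (use JF in \<open>simp add: case_prod_unfold cbox_interval\<close>)
  thus ?thesis by (simp add: G_def[abs_def] cbox_interval)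
qed

end


lemma int_cmult: "integral S (\<lambda>x. c * f x) = c * integral S (f::real\<Rightarrow>real)"
  using integral_cmul[of S c f] by simp

lemma int_multc: "integral S (\<lambda>x. f x * c) = integral S (f::real\<Rightarrow>real) * c"
  using integral_cmul[of S c f] by (simp add: mult.commute)

context sol begin

lemma intux: assumes t: "t \<in> U" shows "integral {0..1::real} (\<lambda>x. ux x t) = 0"
proof -
  have "((\<lambda>x. ux x t) has_integral (u 1 t - u 0 t)) {0..1}"
  proof (rule fundamental_theorem_of_calculus)
    show "(0::real) \<le> 1" by simp
    fix x :: real assume x: "x \<in> {0..1}"
    have "((\<lambda>y. u y t) has_real_derivative ux x t) (at x within {0..1})" using ders x t by blast
    thus "((\<lambda>y. u y t) has_vector_derivative ux x t) (at x within {0..1})"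
      by (simp add: has_real_derivative_iff_has_vector_derivative)
  qed
  moreover have "u 1 t - u 0 t = 0" using bd t by simp
  ultimately show ?thesis by (simp add: integral_unique)
qed

definition hh :: "real \<Rightarrow> real \<Rightarrow> real" where
  "hh t x = (ux x t + u x t * v x t) * (ln (u x t) - ln (a0 t))"

definition hd :: "real \<Rightarrow> real \<Rightarrow> real" where
  "hd t x = (uxx x t + ux x t * v x t + u x t * vx x t) * (ln (u x t) - ln (a0 t))
     + (ux x t + u x t * v x t) * (ux x t / u x t)"

lemma inthd: assumes t: "t \<in> U" shows "integral {0..1::real} (hd t) = 0"
proof -
  have "(hd t has_integral (hh t 1 - hh t 0)) {0..1}"
  proof (rule fundamental_theorem_of_calculus)
    show "(0::real) \<le> 1" by simp
    fix x :: real assume x: "x \<in> {0..1}"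
    have d1: "((\<lambda>y. u y t) has_real_derivative ux x t) (at x within {0..1})" using ders x t by blast
    have d2: "((\<lambda>y. ux y t) has_real_derivative uxx x t) (at x within {0..1})" using ders x t by blast
    have d3: "((\<lambda>y. v y t) has_real_derivative vx x t) (at x within {0..1})" using ders x t by blast
    have up: "u x t > 0" using upos' x t by simp
    have "(hh t has_real_derivative hd t x) (at x within {0..1})"
      unfolding hh_def[abs_def] hd_def
      apply (rule derivative_eq_intros d1 d2 d3 up refl)+
      using up by (simp add: field_simps)
    thus "(hh t has_vector_derivative hd t x) (at x within {0..1})"
      by (simp add: has_real_derivative_iff_has_vector_derivative)
  qed
  moreover have "hh t 1 - hh t 0 = 0" using bd t by (simp add: hh_def)
  ultimately show ?thesis by (simp add: integral_unique)
qed

definition D :: "real \<Rightarrow> real" where "D t = integral {0..1} (\<lambda>x. (ux x t)\<^sup>2 / u x t)"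
definition Iu :: "real \<Rightarrow> real" where "Iu t = integral {0..1} (\<lambda>x. u x t)"

lemma nzs: "t \<in> {0..<T} \<Longrightarrow> \<forall>x\<in>{0..1::real}. u x t \<noteq> 0"
proof
  fix x :: real assume "t \<in> {0..<T}" "x \<in> {0..1}"
  hence "u x t > 0" by (rule upos')
  thus "u x t \<noteq> 0" by simp
qed

lemma intFd: assumes t: "t \<in> U"
  shows "integral {0..1} (Fd t) = - D t - (Iu t - a0 t) * (a1 t / a0 t)"
proof -
  have t0: "t \<in> {0..<T}" using t by simp
  have ap: "a0 t > 0" using a0pos t by simp
  note nz = nzs[OF t0]
  define gg where "gg x = (ux x t)\<^sup>2 / u x t + (u x t - a0 t) * (a1 t / a0 t) + c * ux x t" for x
  have pw: "Fd t x = hd t x - gg x" if x: "x \<in> {0<..<1}" for x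
  proof -
    have x1: "x \<in> {0..1}" using x by simp
    have up: "u x t > 0" using upos'[OF t0 x1] .
    have p1: "ut x t = uxx x t + ux x t * v x t + u x t * vx x t" using pde x t by force
    have p2: "vt x t = ux x t" using pde x t by force
    show ?thesis unfolding Fd_def hd_def gg_def p1 p2 using up
      by (simp add: field_simps power2_eq_square)
  qed
  have chd: "continuous_on {0..1} (hd t)" unfolding hd_def[abs_def]
    by (intro continuous_intros S0[OF t0] S[OF t] nz)
  have c1: "continuous_on {0..1} (\<lambda>x. (ux x t)\<^sup>2 / u x t)"
    by (intro continuous_intros S0[OF t0] S[OF t] nz)
  have c2: "continuous_on {0..1} (\<lambda>x. u x t)" by (rule S0[OF t0])
  have c3: "continuous_on {0..1} (\<lambda>x. ux x t)" by (rule S[OF t])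
  have cgg: "continuous_on {0..1} gg" unfolding gg_def[abs_def]
    by (intro continuous_intros S0[OF t0] S[OF t] nz)
  have "integral {0..1} (Fd t) = integral {0<..<1} (Fd t)" by (rule integral_open_interval_real)
  also have "\<dots> = integral {0<..<1} (\<lambda>x. hd t x - gg x)" by (rule integral_cong) (rule pw)
  also have "\<dots> = integral {0..1} (\<lambda>x. hd t x - gg x)" by (rule integral_open_interval_real[symmetric])
  also have "\<dots> = integral {0..1} (hd t) - integral {0..1} gg"
    by (rule integral_diff) (intro integrable_continuous_real chd cgg)+
  also have "integral {0..1} (hd t) = 0" by (rule inthd[OF t])
  also have "integral {0..1} gg = D t + (Iu t - a0 t) * (a1 t / a0 t) + c * 0"
  proof -
    have i1: "(\<lambda>x. (ux x t)\<^sup>2 / u x t) integrable_on {0..1}" by (rule integrable_continuous_real[OF c1])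
    have i2: "(\<lambda>x. u x t) integrable_on {0..1}" by (rule integrable_continuous_real[OF c2])
    have i3: "(\<lambda>x. ux x t) integrable_on {0..1}" by (rule integrable_continuous_real[OF c3])
    have i4: "(\<lambda>x. (u x t - a0 t) * (a1 t / a0 t)) integrable_on {0..1}"
      by (rule integrable_continuous_real) (intro continuous_intros c2)
    have i5: "(\<lambda>x. c * ux x t) integrable_on {0..1}"
      by (rule integrable_continuous_real) (intro continuous_intros c3)
    have i6: "(\<lambda>x. (ux x t)\<^sup>2 / u x t + (u x t - a0 t) * (a1 t / a0 t)) integrable_on {0..1}"
      by (rule integrable_add[OF i1 i4])
    have "integral {0..1} gg = integral {0..1} (\<lambda>x. (ux x t)\<^sup>2 / u x t + (u x t - a0 t) * (a1 t / a0 t))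
        + integral {0..1} (\<lambda>x. c * ux x t)"
      unfolding gg_def by (rule integral_add[OF i6 i5])
    also have "integral {0..1} (\<lambda>x. (ux x t)\<^sup>2 / u x t + (u x t - a0 t) * (a1 t / a0 t))
       = D t + integral {0..1} (\<lambda>x. (u x t - a0 t) * (a1 t / a0 t))"
      unfolding D_def by (rule integral_add[OF i1 i4])
    also have "integral {0..1} (\<lambda>x. (u x t - a0 t) * (a1 t / a0 t))
       = integral {0..1} (\<lambda>x. u x t - a0 t) * (a1 t / a0 t)" by (rule int_multc)
    also have "integral {0..1} (\<lambda>x. u x t - a0 t) = Iu t - a0 t"
      unfolding Iu_def by (subst integral_diff[OF i2]) auto
    also have "integral {0..1} (\<lambda>x. c * ux x t) = c * 0"
      by (subst int_cmult) (simp add: intux[OF t])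
    finally show ?thesis .
  qed
  finally show ?thesis by simp
qed

end


context sol begin

definition E :: "real \<Rightarrow> real" where
  "E t = integral {0..1} (\<lambda>x. (u x t * ln (u x t) - u x t) - (a0 t * ln (a0 t) - a0 t) - (u x t - a0 t) * ln (a0 t))"
definition V :: "real \<Rightarrow> real" where
  "V t = integral {0..1} (\<lambda>x. (v x t - c)\<^sup>2)"

lemma cEV: assumes t0: "t \<in> {0..<T}"
  shows "continuous_on {0..1} (\<lambda>x. (u x t * ln (u x t) - u x t) - (a0 t * ln (a0 t) - a0 t) - (u x t - a0 t) * ln (a0 t))"
    and "continuous_on {0..1} (\<lambda>x. (v x t - c)\<^sup>2)"
  using nzs[OF t0] by (intro continuous_intros S0[OF t0] | simp)+

lemma GEV: assumes t0: "t \<in> {0..<T}" shows "G t = E t + V t / 2"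
proof -
  have "G t = integral {0..1} (\<lambda>x. ((u x t * ln (u x t) - u x t) - (a0 t * ln (a0 t) - a0 t) - (u x t - a0 t) * ln (a0 t))
             + (v x t - c)\<^sup>2 / 2)" unfolding G_def F_def ..
  also have "\<dots> = E t + integral {0..1} (\<lambda>x. (v x t - c)\<^sup>2 / 2)"
  proof -
    have i1: "(\<lambda>x. (u x t * ln (u x t) - u x t) - (a0 t * ln (a0 t) - a0 t) - (u x t - a0 t) * ln (a0 t)) integrable_on {0..1}"
      by (rule integrable_continuous_real[OF cEV(1)[OF t0]])
    have i2: "(\<lambda>x. (v x t - c)\<^sup>2 / 2) integrable_on {0..1}"
      by (rule integrable_continuous_real) (intro continuous_intros S0[OF t0], simp)
    show ?thesis unfolding E_def by (rule integral_add[OF i1 i2])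
  qed
  also have "integral {0..1} (\<lambda>x. (v x t - c)\<^sup>2 / 2) = V t / 2"
    unfolding V_def using int_multc[of "{0..1}" "\<lambda>x. (v x t - c)\<^sup>2" "1/2"] by simp
  finally show ?thesis .
qed

lemma Enn: assumes t0: "t \<in> {0..<T}" shows "E t \<ge> 0"
  unfolding E_def
proof (rule integral_nonneg)
  show "(\<lambda>x. (u x t * ln (u x t) - u x t) - (a0 t * ln (a0 t) - a0 t) - (u x t - a0 t) * ln (a0 t)) integrable_on {0..1}"
    by (rule integrable_continuous_real[OF cEV(1)[OF t0]])
  fix x :: real assume x: "x \<in> {0..1}"
  have up: "u x t > 0" by (rule upos'[OF t0 x])
  have ap: "a0 t > 0" using a0pos t0 by simp
  have "0 \<le> u x t * (ln (u x t) - ln (a0 t)) - u x t + a0 t" by (rule key_ineq(1)[OF up ap])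
  thus "0 \<le> (u x t * ln (u x t) - u x t) - (a0 t * ln (a0 t) - a0 t) - (u x t - a0 t) * ln (a0 t)"
    by (simp add: algebra_simps)
qed

lemma Vnn: assumes t0: "t \<in> {0..<T}" shows "V t \<ge> 0"
  unfolding V_def by (rule integral_nonneg) (rule integrable_continuous_real[OF cEV(2)[OF t0]], simp)

lemma Dnn: assumes t: "t \<in> U" shows "D t \<ge> 0"
  unfolding D_def
proof (rule integral_nonneg)
  have t0: "t \<in> {0..<T}" using t by simp
  show "(\<lambda>x. (ux x t)\<^sup>2 / u x t) integrable_on {0..1}"
    by (rule integrable_continuous_real) (intro continuous_intros S0[OF t0] S[OF t] nzs[OF t0])
  fix x :: real assume x: "x \<in> {0..1}"
  have up: "u x t > 0" by (rule upos'[OF t0 x])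
  thus "0 \<le> (ux x t)\<^sup>2 / u x t" by simp
qed

lemma Iubound: assumes t: "t \<in> U"
  shows "- ((Iu t - a0 t) * (a1 t / a0 t)) \<le> \<bar>a1 t\<bar> / alow * E t + exp 2 * \<bar>a1 t\<bar>"
proof -
  have t0: "t \<in> {0..<T}" using t by simp
  have ap: "a0 t > 0" using a0pos t by simp
  have al: "alow \<le> a0 t" using alow t by simp
  have cu: "continuous_on {0..1} (\<lambda>x. u x t)" by (rule S0[OF t0])
  have "\<bar>integral {0..1} (\<lambda>x. u x t - a0 t)\<bar> \<le>
        integral {0..1} (\<lambda>x. ((u x t * ln (u x t) - u x t) - (a0 t * ln (a0 t) - a0 t) - (u x t - a0 t) * ln (a0 t)) + exp 2 * a0 t)"
  proof -
    have "norm (integral {0..1} (\<lambda>x. u x t - a0 t)) \<le>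
        integral {0..1} (\<lambda>x. ((u x t * ln (u x t) - u x t) - (a0 t * ln (a0 t) - a0 t) - (u x t - a0 t) * ln (a0 t)) + exp 2 * a0 t)"
    proof (rule integral_norm_bound_integral)
      show "(\<lambda>x. u x t - a0 t) integrable_on {0..1}"
        by (rule integrable_continuous_real) (intro continuous_intros cu)
      show "(\<lambda>x. ((u x t * ln (u x t) - u x t) - (a0 t * ln (a0 t) - a0 t) - (u x t - a0 t) * ln (a0 t)) + exp 2 * a0 t) integrable_on {0..1}"
        by (rule integrable_continuous_real) (intro continuous_intros cEV[OF t0])
      fix x :: real assume x: "x \<in> {0..1}"
      have up: "u x t > 0" by (rule upos'[OF t0 x])
      show "norm (u x t - a0 t) \<le> ((u x t * ln (u x t) - u x t) - (a0 t * ln (a0 t) - a0 t) - (u x t - a0 t) * ln (a0 t)) + exp 2 * a0 t"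
        using key_ineq(2)[OF up ap] by simp
    qed
    thus ?thesis by simp
  qed
  also have "\<dots> = E t + exp 2 * a0 t"
    unfolding E_def
    by (subst integral_add) (auto intro!: integrable_continuous_real cEV[OF t0])
  finally have b1: "\<bar>Iu t - a0 t\<bar> \<le> E t + exp 2 * a0 t"
    unfolding Iu_def by (subst (asm) integral_diff) (auto intro!: integrable_continuous_real cu)
  have "- ((Iu t - a0 t) * (a1 t / a0 t)) \<le> \<bar>Iu t - a0 t\<bar> * (\<bar>a1 t\<bar> / a0 t)"
  proof -
    have "\<bar>a1 t / a0 t\<bar> = \<bar>a1 t\<bar> / a0 t" using ap by simp
    moreover have "- ((Iu t - a0 t) * (a1 t / a0 t)) \<le> \<bar>(Iu t - a0 t) * (a1 t / a0 t)\<bar>" by linarith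
    ultimately show ?thesis by (simp add: abs_mult abs_of_pos[OF ap])
  qed
  also have "\<dots> \<le> (E t + exp 2 * a0 t) * (\<bar>a1 t\<bar> / a0 t)"
    by (rule mult_right_mono[OF b1]) (use ap in simp)
  also have "\<dots> = E t * (\<bar>a1 t\<bar> / a0 t) + exp 2 * \<bar>a1 t\<bar>" using ap by (simp add: field_simps)
  also have "E t * (\<bar>a1 t\<bar> / a0 t) \<le> \<bar>a1 t\<bar> / alow * E t"
  proof -
    have "\<bar>a1 t\<bar> / a0 t \<le> \<bar>a1 t\<bar> / alow" using al alow(1) by (intro divide_left_mono) auto
    hence "E t * (\<bar>a1 t\<bar> / a0 t) \<le> E t * (\<bar>a1 t\<bar> / alow)"
      using Enn[OF t0] by (rule mult_left_mono)
    thus ?thesis by (simp only: mult.commute)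
  qed
  finally show ?thesis by simp
qed

end


context sol begin

definition aa :: "real \<Rightarrow> real" where "aa t = \<bar>a1 t\<bar> / alow"
definition A :: "real \<Rightarrow> real" where "A t = integral {0..t} aa"
definition kap :: real where "kap = exp 2 * alow"
definition Psi :: "real \<Rightarrow> real" where "Psi t = exp (- A t) * (G t + kap)"
definition DI :: "real \<Rightarrow> real" where "DI r = exp (- A r) * D r"

lemma aac: "continuous_on {0..} aa"
  unfolding aa_def[abs_def] by (intro continuous_intros a1c) (use alow in simp)

lemma Ad: assumes t: "t > 0" shows "(A has_real_derivative aa t) (at t)"
proof -
  have c: "continuous_on {0..t+1} aa" by (rule continuous_on_subset[OF aac]) auto
  have "((\<lambda>x. integral {0..x} aa) has_real_derivative aa t) (at t within {0..t+1})"
    by (rule integral_has_real_derivative[OF c]) (use t in simp)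
  moreover have "at t within {0..t+1} = at t" by (rule at_within_Icc_at) (use t in auto)
  ultimately show ?thesis unfolding A_def[abs_def] by simp
qed

lemma Ann: assumes t: "t \<ge> 0" shows "A t \<ge> 0"
  unfolding A_def
proof (rule integral_nonneg)
  show "aa integrable_on {0..t}"
    by (rule integrable_continuous_real, rule continuous_on_subset[OF aac]) auto
  fix x assume "x \<in> {0..t}" thus "0 \<le> aa x" using alow by (simp add: aa_def)
qed

lemma Dc: "continuous_on U D"
proof -
  have nz: "\<forall>p\<in>U \<times> {0..1::real}. u (snd p) (fst p) \<noteq> 0"
  proof
    fix p :: "real \<times> real" assume "p \<in> U \<times> {0..1}"
    hence "fst p \<in> {0..<T}" "snd p \<in> {0..1}" by (simp_all add: mem_Times_iff)
    hence "u (snd p) (fst p) > 0" by (rule upos')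
    thus "u (snd p) (fst p) \<noteq> 0" by simp
  qed
  have j: "continuous_on (U \<times> {0..1::real}) (\<lambda>p. (ux (snd p) (fst p))\<^sup>2 / u (snd p) (fst p))"
    by (intro continuous_intros J(1) J(3) nz)
  have "continuous_on U (\<lambda>t. integral (cbox 0 (1::real)) (\<lambda>x. (ux x t)\<^sup>2 / u x t))"
    by (rule integral_continuous_on_param) (use j in \<open>simp add: case_prod_unfold cbox_interval\<close>)
  thus ?thesis by (simp add: D_def[abs_def] cbox_interval)
qed

definition Gp :: "real \<Rightarrow> real" where "Gp t = - D t - (Iu t - a0 t) * (a1 t / a0 t)"

lemma Gd2: assumes t: "t \<in> U" shows "(G has_real_derivative Gp t) (at t)"
  using Gd[OF t] intFd[OF t] by (simp add: Gp_def)

lemma Gp_bound: assumes t: "t \<in> U" shows "Gp t \<le> - D t + aa t * G t + exp 2 * \<bar>a1 t\<bar>"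
proof -
  have t0: "t \<in> {0..<T}" using t by simp
  have "aa t * E t \<le> aa t * G t"
    using GEV[OF t0] Vnn[OF t0] alow by (intro mult_left_mono) (auto simp: aa_def)
  thus ?thesis using Iubound[OF t] unfolding Gp_def aa_def by simp
qed

lemma Psid: assumes t: "t \<in> U"
  shows "(Psi has_real_derivative exp (- A t) * (Gp t - aa t * (G t + kap))) (at t)"
proof -
  have hA: "(A has_real_derivative aa t) (at t)" using Ad t by simp
  have hG: "(G has_real_derivative Gp t) (at t)" by (rule Gd2[OF t])
  show ?thesis unfolding Psi_def[abs_def]
    apply (rule derivative_eq_intros hA hG refl)+
    by (simp add: algebra_simps)
qed

lemma Psid_le: assumes t: "t \<in> U"
  shows "exp (- A t) * (Gp t - aa t * (G t + kap)) \<le> - DI t"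
proof -
  have "Gp t - aa t * (G t + kap) \<le> - D t"
    using Gp_bound[OF t] alow(1) by (simp add: aa_def kap_def algebra_simps)
  hence "exp (- A t) * (Gp t - aa t * (G t + kap)) \<le> exp (- A t) * (- D t)"
    by (intro mult_left_mono) auto
  thus ?thesis by (simp add: DI_def)
qed

lemma mono: assumes s: "0 < s" "s \<le> t" "t < T"
  shows "Psi t + integral {s..t} DI \<le> Psi s"
proof -
  have sub: "{s..t} \<subseteq> U" using s by auto
  have DIc: "continuous_on {s..t} DI"
  proof -
    have "continuous_on {s..t} A"
      by (rule continuous_at_imp_continuous_on) (use s in \<open>auto intro!: DERIV_isCont Ad\<close>)
    moreover have "continuous_on {s..t} D" by (rule continuous_on_subset[OF Dc sub])
    ultimately show ?thesis unfolding DI_def[abs_def] by (intro continuous_intros)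
  qed
  have Pc: "continuous_on {s..t} Psi"
  proof (rule continuous_at_imp_continuous_on, rule ballI)
    fix x assume "x \<in> {s..t}"
    hence "x \<in> U" using sub by auto
    thus "isCont Psi x" using Psid DERIV_isCont by blast
  qed
  have Ic: "continuous_on {s..t} (\<lambda>r. integral {s..r} DI)"
    by (rule DERIV_continuous_on[where D=DI]) (rule integral_has_real_derivative[OF DIc])
  have "(\<lambda>r. Psi r + integral {s..r} DI) t \<le> (\<lambda>r. Psi r + integral {s..r} DI) s"
  proof (rule DERIV_nonpos_imp_decreasing_open[OF s(2)])
    show "continuous_on {s..t} (\<lambda>r. Psi r + integral {s..r} DI)" by (intro continuous_intros Pc Ic)
    fix x assume x: "s < x" "x < t"
    hence xU: "x \<in> U" using s by auto
    have h1: "((\<lambda>r. integral {s..r} DI) has_real_derivative DI x) (at x within {s..t})"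
      by (rule integral_has_real_derivative[OF DIc]) (use x in simp)
    moreover have "at x within {s..t} = at x" by (rule at_within_Icc_at) (use x in auto)
    ultimately have h1': "((\<lambda>r. integral {s..r} DI) has_real_derivative DI x) (at x)" by simp
    have "((\<lambda>r. Psi r + integral {s..r} DI) has_real_derivative
           exp (- A x) * (Gp x - aa x * (G x + kap)) + DI x) (at x)"
      by (rule DERIV_add[OF Psid[OF xU] h1'])
    moreover have "exp (- A x) * (Gp x - aa x * (G x + kap)) + DI x \<le> 0" using Psid_le[OF xU] by simp
    ultimately show "\<exists>y. ((\<lambda>r. Psi r + integral {s..r} DI) has_real_derivative y) (at x) \<and> y \<le> 0" by blast
  qed
  thus ?thesis by simp
qed

end


context sol begin

lemma Mv: assumes t0: "t \<in> {0..<T}"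
  shows "integral {0..1} (\<lambda>x. v x t) = integral {0..1} (\<lambda>x. v x 0)"
proof (cases "t = 0")
  case True thus ?thesis by simp
next
  case False
  hence tp: "t > 0" using t0 by simp
  have Mc: "continuous_on {0..<T} (\<lambda>t. integral {0..1} (\<lambda>x. v x t))"
  proof -
    have "continuous_on {0..<T} (\<lambda>t. integral (cbox 0 (1::real)) (\<lambda>x. v x t))"
      by (rule integral_continuous_on_param) (use J0(2) in \<open>simp add: case_prod_unfold cbox_interval\<close>)
    thus ?thesis by (simp add: cbox_interval)
  qed
  have dM: "((\<lambda>t. integral {0..1} (\<lambda>x. v x t)) has_real_derivative 0) (at s)" if s: "s \<in> U" for s
  proof -
    have "((\<lambda>t. integral {0..1} (\<lambda>x. v x t)) has_real_derivative integral {0..1} (\<lambda>x. vt x s)) (at s)"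
    proof (rule leib)
      show "open U" by simp
      show "convex U" by simp
      show "s \<in> U" by (rule s)
      show "((\<lambda>t. v x t) has_real_derivative vt x r) (at r)" if "r \<in> U" "x \<in> {0..1}" for r x
        using ders that by blast
      show "continuous_on {0..1} (\<lambda>x. v x r)" if "r \<in> U" for r using S0(2) that by simp
      show "continuous_on (U \<times> {0..1}) (\<lambda>p. vt (snd p) (fst p))" by (rule J(7))
    qed
    moreover have "integral {0..1} (\<lambda>x. vt x s) = 0"
    proof -
      have "integral {0..1} (\<lambda>x. vt x s) = integral {0<..<1} (\<lambda>x. vt x s)" by (rule integral_open_interval_real)
      also have "\<dots> = integral {0<..<1} (\<lambda>x. ux x s)"
        by (rule integral_cong) (use pde s in force)
      also have "\<dots> = integral {0..1} (\<lambda>x. ux x s)" by (rule integral_open_interval_real[symmetric])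
      also have "\<dots> = 0" by (rule intux[OF s])
      finally show ?thesis .
    qed
    ultimately show ?thesis by simp
  qed
  have "(\<lambda>t. integral {0..1} (\<lambda>x. v x t)) t = (\<lambda>t. integral {0..1} (\<lambda>x. v x t)) 0"
  proof (rule DERIV_isconst_end[OF tp])
    show "continuous_on {0..t} (\<lambda>t. integral {0..1} (\<lambda>x. v x t))"
      by (rule continuous_on_subset[OF Mc]) (use t0 in auto)
    fix x assume "0 < x" "x < t" thus "((\<lambda>t. integral {0..1} (\<lambda>x. v x t)) has_real_derivative 0) (at x)"
      using dM t0 by simp
  qed
  thus ?thesis by simp
qed

lemma DIc: assumes "0 < s" "t < T" shows "continuous_on {s..t} DI"
proof -
  have sub: "{s..t} \<subseteq> U" using assms by auto
  have "continuous_on {s..t} A"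
    by (rule continuous_at_imp_continuous_on) (use assms in \<open>auto intro!: DERIV_isCont Ad\<close>)
  moreover have "continuous_on {s..t} D" by (rule continuous_on_subset[OF Dc sub])
  ultimately show ?thesis unfolding DI_def[abs_def] by (intro continuous_intros)
qed

lemma Gnn: "t \<in> {0..<T} \<Longrightarrow> G t \<ge> 0"
  using GEV Enn Vnn by force

lemma Gbound:
  assumes Ab: "\<forall>r\<ge>0. A r \<le> Aall" and s: "0 < s" "s \<le> t" "t < T"
  shows "G t \<le> exp Aall * (G s + kap)" and "integral {s..t} D \<le> exp Aall * (G s + kap)"
proof -
  have kp: "kap > 0" using alow by (simp add: kap_def)
  have s0: "s \<in> {0..<T}" "t \<in> {0..<T}" using s by auto
  have m: "Psi t + integral {s..t} DI \<le> Psi s" by (rule mono[OF s])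
  have "Psi s \<le> G s + kap"
  proof -
    have "exp (- A s) \<le> 1" using Ann[of s] s by simp
    moreover have "G s + kap \<ge> 0" using Gnn[OF s0(1)] kp by simp
    ultimately have "exp (- A s) * (G s + kap) \<le> 1 * (G s + kap)" by (rule mult_right_mono)
    thus ?thesis unfolding Psi_def by simp
  qed
  with m have m2: "Psi t + integral {s..t} DI \<le> G s + kap" by simp
  have eA: "exp (- Aall) \<le> exp (- A r)" if "r \<ge> 0" for r
  proof -
    have "A r \<le> Aall" using Ab that by blast
    thus ?thesis by simp
  qed
  have Ds: "\<And>r. r \<in> {s..t} \<Longrightarrow> D r \<ge> 0" using s by (intro Dnn) auto
  have cD: "continuous_on {s..t} D" by (rule continuous_on_subset[OF Dc]) (use s in auto)
  have iDI: "integral {s..t} DI \<ge> exp (- Aall) * integral {s..t} D"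
  proof -
    have "integral {s..t} (\<lambda>r. exp (- Aall) * D r) \<le> integral {s..t} DI"
    proof (rule integral_le)
      show "(\<lambda>r. exp (- Aall) * D r) integrable_on {s..t}"
        by (rule integrable_continuous_real) (intro continuous_intros cD)
      show "DI integrable_on {s..t}" by (rule integrable_continuous_real[OF DIc]) (use s in auto)
      fix r assume r: "r \<in> {s..t}"
      hence "r \<ge> 0" using s by simp
      thus "exp (- Aall) * D r \<le> DI r" unfolding DI_def using eA Ds[OF r] by (intro mult_right_mono) auto
    qed
    thus ?thesis by (simp add: int_cmult)
  qed
  have DIn: "integral {s..t} DI \<ge> 0"
  proof -
    have "exp (- Aall) * integral {s..t} D \<ge> 0"
      using Ds by (intro mult_nonneg_nonneg integral_nonneg integrable_continuous_real cD) auto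
    thus ?thesis using iDI by linarith
  qed
  have Pt: "Psi t \<ge> exp (- Aall) * (G t + kap)"
    unfolding Psi_def using eA[of t] s Gnn[OF s0(2)] kp by (intro mult_right_mono) auto
  have "exp (- Aall) * (G t + kap) \<le> G s + kap" using m2 Pt DIn by linarith
  hence "G t + kap \<le> exp Aall * (G s + kap)"
    by (simp add: exp_minus field_simps)
  thus "G t \<le> exp Aall * (G s + kap)" using kp by linarith
  have "Psi t \<ge> 0" unfolding Psi_def using Gnn[OF s0(2)] kp by simp
  hence "exp (- Aall) * integral {s..t} D \<le> G s + kap" using m2 iDI by linarith
  thus "integral {s..t} D \<le> exp Aall * (G s + kap)"
    by (simp add: exp_minus field_simps)
qed

lemma nearzero: "\<exists>\<delta>>0. \<forall>s\<in>{0..<T}. s < \<delta> \<longrightarrow> G s \<le> \<bar>G 0\<bar> + 1"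
proof (cases "T > 0")
  case True
  hence z: "0 \<in> {0..<T}" by simp
  obtain d where d: "d > 0" "\<forall>s\<in>{0..<T}. dist s 0 < d \<longrightarrow> dist (G s) (G 0) < 1"
    using Gc z unfolding continuous_on_iff by (meson zero_less_one)
  show ?thesis
  proof (intro exI[of _ d] conjI ballI impI)
    show "d > 0" by (rule d(1))
    fix s assume "s \<in> {0..<T}" "s < d"
    hence "dist (G s) (G 0) < 1" using d(2) by (simp add: dist_real_def)
    thus "G s \<le> \<bar>G 0\<bar> + 1" by (simp add: dist_real_def)
  qed
next
  case False thus ?thesis by (intro exI[of _ 1]) auto
qed

end


context sol begin

lemma inner: assumes t: "\<tau> \<in> U"
  shows "(\<integral>\<^sup>+x\<in>{0..1}. ennreal ((deriv (\<lambda>y. u y \<tau>) x)\<^sup>2 / u x \<tau>) \<partial>lborel) = ennreal (D \<tau>)"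
proof -
  have t0: "\<tau> \<in> {0..<T}" using t by simp
  have ae: "AE x in lborel. (x::real) \<noteq> 0 \<and> x \<noteq> 1"
    using AE_lborel_singleton[of "0::real"] AE_lborel_singleton[of "1::real"] by (rule eventually_conj)
  have "(\<integral>\<^sup>+x. ennreal ((deriv (\<lambda>y. u y \<tau>) x)\<^sup>2 / u x \<tau>) * indicator {0..1} x \<partial>lborel)
      = (\<integral>\<^sup>+x. ennreal ((ux x \<tau>)\<^sup>2 / u x \<tau>) * indicator {0..1} x \<partial>lborel)"
  proof (rule nn_integral_cong_AE)
    show "AE x in lborel. ennreal ((deriv (\<lambda>y. u y \<tau>) x)\<^sup>2 / u x \<tau>) * indicator {0..1} x
        = ennreal ((ux x \<tau>)\<^sup>2 / u x \<tau>) * indicator {0..1} x"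
      using ae
    proof (rule eventually_mono)
      fix x :: real assume x: "x \<noteq> 0 \<and> x \<noteq> 1"
      show "ennreal ((deriv (\<lambda>y. u y \<tau>) x)\<^sup>2 / u x \<tau>) * indicator {0..1} x
        = ennreal ((ux x \<tau>)\<^sup>2 / u x \<tau>) * indicator {0..1} x"
      proof (cases "x \<in> {0..1}")
        case True
        hence x01: "0 < x" "x < 1" using x by auto
        have "((\<lambda>y. u y \<tau>) has_real_derivative ux x \<tau>) (at x within {0..1})" using ders True t by blast
        moreover have "at x within {0..1} = at x" by (rule at_within_Icc_at) (use x01 in auto)
        ultimately have "((\<lambda>y. u y \<tau>) has_real_derivative ux x \<tau>) (at x)" by simp
        hence "deriv (\<lambda>y. u y \<tau>) x = ux x \<tau>" by (rule DERIV_imp_deriv)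
        thus ?thesis by simp
      next
        case False thus ?thesis by simp
      qed
    qed
  qed
  also have "\<dots> = ennreal (D \<tau>)"
    unfolding D_def
  proof (rule nn_integral_has_integral_lebesgue')
    fix x :: real assume x: "x \<in> {0..1}"
    have "u x \<tau> > 0" by (rule upos'[OF t0 x])
    thus "0 \<le> (ux x \<tau>)\<^sup>2 / u x \<tau>" by simp
  next
    have "(\<lambda>x. (ux x \<tau>)\<^sup>2 / u x \<tau>) integrable_on {0..1}"
      by (rule integrable_continuous_real) (intro continuous_intros S0[OF t0] S[OF t] nzs[OF t0])
    thus "((\<lambda>x. (ux x \<tau>)\<^sup>2 / u x \<tau>) has_integral integral {0..1} (\<lambda>x. (ux x \<tau>)\<^sup>2 / u x \<tau>)) {0..1}"
      by (rule integrable_integral)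
  qed
  finally show ?thesis .
qed

lemma Gfinal:
  assumes Ab: "\<forall>r\<ge>0. A r \<le> Aall" and t0: "t \<in> {0..<T}"
  defines "K \<equiv> exp Aall * (\<bar>G 0\<bar> + 1 + kap)"
  shows "G t \<le> K"
    and "(\<integral>\<^sup>+\<tau>\<in>{0..t}. (\<integral>\<^sup>+x\<in>{0..1}. ennreal ((deriv (\<lambda>y. u y \<tau>) x)\<^sup>2 / u x \<tau>) \<partial>lborel) \<partial>lborel)
           \<le> ennreal K"
proof -
  have kp: "kap > 0" using alow by (simp add: kap_def)
  have A0: "A 0 = 0" by (simp add: A_def)
  have Aall0: "Aall \<ge> 0" using Ab A0 by force
  have e1: "exp Aall \<ge> 1" using Aall0 by simp
  have Kpos: "K \<ge> 0" unfolding K_def using kp by simp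
  obtain d where d: "d > 0" "\<forall>s\<in>{0..<T}. s < d \<longrightarrow> G s \<le> \<bar>G 0\<bar> + 1" using nearzero by blast
  have KK: "exp Aall * (G s + kap) \<le> K" if "s \<in> {0..<T}" "s < d" for s
  proof -
    have "G s + kap \<le> \<bar>G 0\<bar> + 1 + kap" using d(2) that by auto
    thus ?thesis unfolding K_def by (intro mult_left_mono) auto
  qed
  show "G t \<le> K"
  proof (cases "t = 0")
    case True
    have "G 0 \<le> 1 * (\<bar>G 0\<bar> + 1 + kap)" using kp by simp
    also have "\<dots> \<le> K" unfolding K_def using kp e1 by (intro mult_right_mono) auto
    finally show ?thesis using True by simp
  next
    case False
    hence tp: "t > 0" using t0 by simp
    define s where "s = min d t / 2"
    have s: "0 < s" "s \<le> t" "t < T" "s < d" using tp d(1) t0 by (auto simp: s_def)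
    have "G t \<le> exp Aall * (G s + kap)" by (rule Gbound(1)[OF Ab s(1-3)])
    also have "\<dots> \<le> K" by (rule KK) (use s in auto)
    finally show ?thesis .
  qed
  show "(\<integral>\<^sup>+\<tau>\<in>{0..t}. (\<integral>\<^sup>+x\<in>{0..1}. ennreal ((deriv (\<lambda>y. u y \<tau>) x)\<^sup>2 / u x \<tau>) \<partial>lborel) \<partial>lborel)
           \<le> ennreal K"
  proof (cases "t = 0")
    case True
    have "(\<integral>\<^sup>+\<tau>\<in>{0..t}. (\<integral>\<^sup>+x\<in>{0..1}. ennreal ((deriv (\<lambda>y. u y \<tau>) x)\<^sup>2 / u x \<tau>) \<partial>lborel) \<partial>lborel)
        = (\<integral>\<^sup>+\<tau>. (0::ennreal) \<partial>(lborel::real measure))"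
    proof (rule nn_integral_cong_AE)
      show "AE \<tau> in lborel. (\<integral>\<^sup>+x\<in>{0..1}. ennreal ((deriv (\<lambda>y. u y \<tau>) x)\<^sup>2 / u x \<tau>) \<partial>lborel) * indicator {0..t} \<tau> = 0"
        using AE_lborel_singleton[of "0::real"] by (rule eventually_mono) (simp add: True)
    qed
    thus ?thesis by simp
  next
    case False
    hence tp: "t > 0" using t0 by simp
    define m where "m = min d t"
    have m: "0 < m" "m \<le> t" "m \<le> d" using tp d(1) by (auto simp: m_def)
    define sq where "sq n = m / (real n + 2)" for n :: nat
    have sq: "0 < sq n" "sq n \<le> t" "sq n < d" for n
    proof -
      show "0 < sq n" using m by (simp add: sq_def)
      have "sq n \<le> m / 1" unfolding sq_def using m by (intro divide_left_mono) auto
      hence "sq n \<le> m" by simp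
      moreover have "sq n < m" unfolding sq_def using m by (simp add: divide_less_eq)
      ultimately show "sq n \<le> t" "sq n < d" using m by auto
    qed
    have sqmono: "sq n' \<le> sq n" if "n \<le> n'" for n n'
      unfolding sq_def using m that by (intro divide_left_mono) auto
    define f where "f n \<tau> = ennreal (D \<tau>) * indicator {sq n..t} \<tau>" for n \<tau>
    have f_eq: "f n = (\<lambda>\<tau>. ennreal (indicator {sq n..t} \<tau> *\<^sub>R D \<tau>))" for n
    proof
      fix \<tau> show "f n \<tau> = ennreal (indicator {sq n..t} \<tau> *\<^sub>R D \<tau>)"
        by (simp add: f_def split: split_indicator)
    qed
    have subU: "{sq n..t} \<subseteq> U" for n
    proof
      fix x assume "x \<in> {sq n..t}"
      hence "sq n \<le> x" "x \<le> t" by auto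
      moreover have "0 < sq n" by (rule sq(1))
      ultimately show "x \<in> U" using t0 by auto
    qed
    have cDn: "continuous_on {sq n..t} D" for n
      by (rule continuous_on_subset[OF Dc subU])
    have meas: "f n \<in> borel_measurable lborel" for n
    proof -
      have "(\<lambda>\<tau>. indicator {sq n..t} \<tau> *\<^sub>R D \<tau>) \<in> borel_measurable borel"
        by (rule borel_measurable_continuous_on_indicator[OF _ cDn]) simp
      hence "(\<lambda>\<tau>. ennreal (indicator {sq n..t} \<tau> *\<^sub>R D \<tau>)) \<in> borel_measurable borel"
        by (rule measurable_compose[OF _ measurable_ennreal])
      thus ?thesis unfolding f_eq by simp
    qed
    have inc: "incseq f"
    proof (rule incseq_SucI, rule le_funI)
      fix n \<tau>
      have "sq (Suc n) \<le> sq n" by (rule sqmono) simp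
      thus "f n \<tau> \<le> f (Suc n) \<tau>" by (auto simp: f_def split: split_indicator)
    qed
    have fint: "integral\<^sup>N lborel (f n) \<le> ennreal K" for n
    proof -
      have Dsn: "\<And>r. r \<in> {sq n..t} \<Longrightarrow> D r \<ge> 0" using subU[of n] by (intro Dnn) auto
      have "integral\<^sup>N lborel (f n) = ennreal (integral {sq n..t} D)"
        unfolding f_def
        by (rule nn_integral_has_integral_lebesgue'[OF Dsn integrable_integral[OF integrable_continuous_real[OF cDn]]])
      also have "integral {sq n..t} D \<le> exp Aall * (G (sq n) + kap)"
        by (rule Gbound(2)[OF Ab sq(1) sq(2)]) (use t0 in auto)
      also have "\<dots> \<le> K" by (rule KK) (use sq(1)[of n] sq(2)[of n] sq(3)[of n] t0 in auto)
      finally show ?thesis by (simp add: ennreal_leI)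
    qed
    have "(\<integral>\<^sup>+\<tau>\<in>{0..t}. (\<integral>\<^sup>+x\<in>{0..1}. ennreal ((deriv (\<lambda>y. u y \<tau>) x)\<^sup>2 / u x \<tau>) \<partial>lborel) \<partial>lborel)
        \<le> (\<integral>\<^sup>+\<tau>. (SUP n. f n \<tau>) \<partial>lborel)"
    proof (rule nn_integral_mono_AE)
      show "AE \<tau> in lborel. (\<integral>\<^sup>+x\<in>{0..1}. ennreal ((deriv (\<lambda>y. u y \<tau>) x)\<^sup>2 / u x \<tau>) \<partial>lborel) * indicator {0..t} \<tau>
          \<le> (SUP n. f n \<tau>)"
        using AE_lborel_singleton[of "0::real"]
      proof (rule eventually_mono)
        fix \<tau> :: real assume tn: "\<tau> \<noteq> 0"
        show "(\<integral>\<^sup>+x\<in>{0..1}. ennreal ((deriv (\<lambda>y. u y \<tau>) x)\<^sup>2 / u x \<tau>) \<partial>lborel) * indicator {0..t} \<tau>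
          \<le> (SUP n. f n \<tau>)"
        proof (cases "\<tau> \<in> {0..t}")
          case False thus ?thesis by simp
        next
          case True
          hence tp': "0 < \<tau>" "\<tau> \<le> t" using tn by auto
          hence tU: "\<tau> \<in> U" using t0 by auto
          obtain n :: nat where n: "real n \<ge> m / \<tau>" using real_arch_simple by blast
          have "m \<le> \<tau> * real n" using n tp' by (simp add: divide_le_eq mult.commute)
          hence "m \<le> \<tau> * (real n + 2)" using tp' by (simp add: algebra_simps)
          hence "sq n \<le> \<tau>" unfolding sq_def by (simp add: divide_le_eq mult.commute)
          hence "f n \<tau> = ennreal (D \<tau>)" using tp' by (simp add: f_def)
          hence "ennreal (D \<tau>) \<le> (SUP n. f n \<tau>)" by (metis SUP_upper UNIV_I)
          thus ?thesis using True inner[OF tU] by simp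
        qed
      qed
    qed
    also have "\<dots> = (SUP n. integral\<^sup>N lborel (f n))"
      by (rule nn_integral_monotone_convergence_SUP[OF inc meas])
    also have "\<dots> \<le> ennreal K" by (rule SUP_least) (rule fint)
    finally show ?thesis .
  qed
qed

end


theorem mainTheorem9:
  fixes u0 v0 \<alpha> :: "real \<Rightarrow> real"
    and \<alpha>d :: "nat \<Rightarrow> real \<Rightarrow> real"
    and \<alpha>low :: real
  assumes u0_pos: "\<forall>x\<in>{0..1}. u0 x > 0"
    and u0_H2: "H2_01 u0" and v0_H2: "H2_01 v0"
    and compat: "u0 0 = \<alpha> 0" "u0 1 = \<alpha> 0"
    and alpha_d0: "\<forall>t\<ge>0. \<alpha>d 0 t = \<alpha> t"
    and alpha_smooth: "\<forall>k. \<forall>t\<ge>0. (\<alpha>d k has_real_derivative \<alpha>d (Suc k) t) (at t within {0..})"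
    and alpha_low: "\<alpha>low > 0" "\<forall>t\<ge>0. \<alpha> t \<ge> \<alpha>low"
    and alpha_W11: "set_integrable lborel {0..} (\<alpha>d 1)" "set_integrable lborel {0..} (\<alpha>d 2)"
  shows "\<exists>C>0. \<forall>T u v.
           classical_solution T u0 v0 \<alpha> u v \<and> (\<forall>x\<in>{0..1}. \<forall>t\<in>{0..<T}. u x t > 0) \<longrightarrow>
           (\<forall>t\<in>{0..<T}.
              (LBINT x:{0..1}. v x t) = (LBINT x:{0..1}. v0 x) \<and>
              ennreal (rel_entropy (\<lambda>x. u x t) (\<alpha> t)
                       + L2norm_sq01 (\<lambda>x. v x t - (LBINT y:{0..1}. v0 y)))
              + (\<integral>\<^sup>+\<tau>\<in>{0..t}. (\<integral>\<^sup>+x\<in>{0..1}.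
                    ennreal ((deriv (\<lambda>y. u y \<tau>) x)\<^sup>2 / u x \<tau>) \<partial>lborel) \<partial>lborel)
              \<le> ennreal C)"
proof -
  define c where "c = (LBINT y:{0..1}. v0 y)"
  define Aall where "Aall = (LBINT x:{0..}. \<bar>\<alpha>d 1 x\<bar>) / \<alpha>low"
  define kp where "kp = exp 2 * \<alpha>low"
  define G0 where "G0 = rel_entropy u0 (\<alpha> 0) + L2norm_sq01 (\<lambda>x. v0 x - c) / 2"
  define K where "K = exp Aall * (\<bar>G0\<bar> + 1 + kp)"
  have kp0: "kp > 0" using alpha_low by (simp add: kp_def)
  have K0: "K \<ge> 0" unfolding K_def using kp0 by simp
  have a1c: "continuous_on {0..} (\<alpha>d 1)"
  proof (rule DERIV_continuous_on[where D="\<alpha>d 2"])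
    fix x :: real assume "x \<in> {0..}"
    hence "x \<ge> 0" by simp
    hence "(\<alpha>d 1 has_real_derivative \<alpha>d (Suc 1) x) (at x within {0..})" using alpha_smooth by blast
    thus "(\<alpha>d 1 has_real_derivative \<alpha>d 2 x) (at x within {0..})" by (simp add: numeral_2_eq_2)
  qed
  have a0d: "\<forall>t\<ge>0. (\<alpha>d 0 has_real_derivative \<alpha>d 1 t) (at t within {0..})"
  proof (intro allI impI)
    fix t :: real assume "t \<ge> 0"
    hence "(\<alpha>d 0 has_real_derivative \<alpha>d (Suc 0) t) (at t within {0..})" using alpha_smooth by blast
    thus "(\<alpha>d 0 has_real_derivative \<alpha>d 1 t) (at t within {0..})" by simp
  qed
  have alow2: "\<forall>t\<ge>0. \<alpha>d 0 t \<ge> \<alpha>low" using alpha_d0 alpha_low(2) by simp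
  have Ibound: "(LBINT x:{0..r}. \<bar>\<alpha>d 1 x\<bar>) \<le> (LBINT x:{0..}. \<bar>\<alpha>d 1 x\<bar>)" if r: "r \<ge> 0" for r
  proof -
    have i0: "set_integrable lborel {0..} (\<lambda>x. \<bar>\<alpha>d 1 x\<bar>)" by (rule set_integrable_abs[OF alpha_W11(1)])
    have ir: "set_integrable lborel {0..r} (\<lambda>x. \<bar>\<alpha>d 1 x\<bar>)" by (rule set_integrable_subset[OF i0]) auto
    show ?thesis unfolding set_lebesgue_integral_def
      using i0 ir unfolding set_integrable_def by (intro integral_mono) (auto split: split_indicator)
  qed
  show ?thesis
  proof (intro exI[of _ "3 * K + 1"] conjI allI impI ballI)
    show "3 * K + 1 > 0" using K0 by simp
    fix T u v t
    assume H: "classical_solution T u0 v0 \<alpha> u v \<and> (\<forall>x\<in>{0..1}. \<forall>t\<in>{0..<T}. u x t > 0)"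
      and t0: "t \<in> {0..<T}"
    from H obtain ux uxx ut vx vt where
      cu: "continuous_on ({0..1} \<times> {0..<T}) (\<lambda>(x,t). u x t)"
      and cv: "continuous_on ({0..1} \<times> {0..<T}) (\<lambda>(x,t). v x t)"
      and ders: "\<forall>x\<in>{0..1}. \<forall>t\<in>{0<..<T}.
           ((\<lambda>y. u y t) has_real_derivative ux x t) (at x within {0..1}) \<and>
           ((\<lambda>y. ux y t) has_real_derivative uxx x t) (at x within {0..1}) \<and>
           ((\<lambda>s. u x s) has_real_derivative ut x t) (at t) \<and>
           ((\<lambda>y. v y t) has_real_derivative vx x t) (at x within {0..1}) \<and>
           ((\<lambda>s. v x s) has_real_derivative vt x t) (at t)"
      and cux: "continuous_on ({0..1} \<times> {0<..<T}) (\<lambda>(x,t). ux x t)"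
      and cuxx: "continuous_on ({0..1} \<times> {0<..<T}) (\<lambda>(x,t). uxx x t)"
      and cut: "continuous_on ({0..1} \<times> {0<..<T}) (\<lambda>(x,t). ut x t)"
      and cvx: "continuous_on ({0..1} \<times> {0<..<T}) (\<lambda>(x,t). vx x t)"
      and cvt: "continuous_on ({0..1} \<times> {0<..<T}) (\<lambda>(x,t). vt x t)"
      and pde: "\<forall>x\<in>{0<..<1}. \<forall>t\<in>{0<..<T}.
           ut x t - (ux x t * v x t + u x t * vx x t) = uxx x t \<and> vt x t - ux x t = 0"
      and init: "\<forall>x\<in>{0..1}. u x 0 = u0 x \<and> v x 0 = v0 x"
      and bd0: "\<forall>t\<in>{0..<T}. u 0 t = \<alpha> t \<and> u 1 t = \<alpha> t"
      and upos: "\<forall>x\<in>{0..1}. \<forall>t\<in>{0..<T}. u x t > 0"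
      unfolding classical_solution_def by blast
    have bd: "\<forall>t\<in>{0..<T}. u 0 t = \<alpha>d 0 t \<and> u 1 t = \<alpha>d 0 t" using bd0 alpha_d0 by simp
    interpret S: sol T u v ux uxx ut vx vt "\<alpha>d 0" "\<alpha>d 1" \<alpha>low c
      by (unfold_locales) (fact cu cv ders cux cuxx cut cvx cvt pde bd upos a0d a1c alpha_low(1) alow2)+
    have Ab: "\<forall>r\<ge>0. S.A r \<le> Aall"
    proof (intro allI impI)
      fix r :: real assume r: "r \<ge> 0"
      have ca: "continuous_on {0..r} (\<lambda>x. \<bar>\<alpha>d 1 x\<bar>)"
        by (intro continuous_intros continuous_on_subset[OF a1c]) auto
      have "S.A r = integral {0..r} (\<lambda>x. \<bar>\<alpha>d 1 x\<bar> * (1 / \<alpha>low))"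
        unfolding S.A_def S.aa_def by simp
      also have "\<dots> = integral {0..r} (\<lambda>x. \<bar>\<alpha>d 1 x\<bar>) * (1 / \<alpha>low)" by (rule int_multc)
      also have "integral {0..r} (\<lambda>x. \<bar>\<alpha>d 1 x\<bar>) = (LBINT x:{0..r}. \<bar>\<alpha>d 1 x\<bar>)"
        by (rule lbint_cont[OF ca, symmetric])
      also have "(LBINT x:{0..r}. \<bar>\<alpha>d 1 x\<bar>) * (1 / \<alpha>low) \<le> (LBINT x:{0..}. \<bar>\<alpha>d 1 x\<bar>) * (1 / \<alpha>low)"
        by (rule mult_right_mono[OF Ibound[OF r]]) (use alpha_low in simp)
      finally show "S.A r \<le> Aall" by (simp add: Aall_def)
    qed
    have T0: "0 \<in> {0..<T}" using t0 by simp
    have at: "\<alpha> t = \<alpha>d 0 t" using alpha_d0 t0 by simp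
    have a00: "\<alpha> 0 = \<alpha>d 0 0" using alpha_d0 by simp
    have Et: "rel_entropy (\<lambda>x. u x t) (\<alpha> t) = S.E t"
      unfolding rel_entropy_def S.E_def at by (rule lbint_cont[OF S.cEV(1)[OF t0]])
    have Vt: "L2norm_sq01 (\<lambda>x. v x t - c) = S.V t"
      unfolding L2norm_sq01_def S.V_def by (rule lbint_cont[OF S.cEV(2)[OF t0]])
    have E0: "rel_entropy u0 (\<alpha> 0) = S.E 0"
    proof -
      have "rel_entropy u0 (\<alpha> 0) = rel_entropy (\<lambda>x. u x 0) (\<alpha> 0)"
        unfolding rel_entropy_def by (rule set_lebesgue_integral_cong) (use init in auto)
      also have "\<dots> = S.E 0"
        unfolding rel_entropy_def S.E_def a00 by (rule lbint_cont[OF S.cEV(1)[OF T0]])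
      finally show ?thesis .
    qed
    have V0: "L2norm_sq01 (\<lambda>x. v0 x - c) = S.V 0"
    proof -
      have "L2norm_sq01 (\<lambda>x. v0 x - c) = L2norm_sq01 (\<lambda>x. v x 0 - c)"
        unfolding L2norm_sq01_def by (rule set_lebesgue_integral_cong) (use init in auto)
      also have "\<dots> = S.V 0"
        unfolding L2norm_sq01_def S.V_def by (rule lbint_cont[OF S.cEV(2)[OF T0]])
      finally show ?thesis .
    qed
    have G0eq: "S.G 0 = G0" unfolding G0_def E0 V0 by (rule S.GEV[OF T0])
    have KK: "K = exp Aall * (\<bar>S.G 0\<bar> + 1 + S.kap)" unfolding K_def G0eq S.kap_def kp_def ..
    have Gt: "S.G t \<le> K" unfolding KK by (rule S.Gfinal(1)[OF Ab t0])
    have NN: "(\<integral>\<^sup>+\<tau>\<in>{0..t}. (\<integral>\<^sup>+x\<in>{0..1}. ennreal ((deriv (\<lambda>y. u y \<tau>) x)\<^sup>2 / u x \<tau>) \<partial>lborel) \<partial>lborel)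
        \<le> ennreal K" unfolding KK by (rule S.Gfinal(2)[OF Ab t0])
    show "(LBINT x:{0..1}. v x t) = (LBINT x:{0..1}. v0 x)"
    proof -
      have "(LBINT x:{0..1}. v x t) = integral {0..1} (\<lambda>x. v x t)" by (rule lbint_cont[OF S.S0(2)[OF t0]])
      also have "\<dots> = integral {0..1} (\<lambda>x. v x 0)" by (rule S.Mv[OF t0])
      also have "\<dots> = (LBINT x:{0..1}. v x 0)" by (rule lbint_cont[OF S.S0(2)[OF T0], symmetric])
      also have "\<dots> = (LBINT x:{0..1}. v0 x)" by (rule set_lebesgue_integral_cong) (use init in auto)
      finally show ?thesis .
    qed
    have EV: "S.E t + S.V t \<le> 2 * K"
      using S.GEV[OF t0] S.Enn[OF t0] Gt by linarith
    have EVn: "S.E t + S.V t \<ge> 0" using S.Enn[OF t0] S.Vnn[OF t0] by simp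
    have "ennreal (rel_entropy (\<lambda>x. u x t) (\<alpha> t) + L2norm_sq01 (\<lambda>x. v x t - (LBINT y:{0..1}. v0 y)))
        = ennreal (S.E t + S.V t)" using Et Vt by (simp add: c_def)
    hence "ennreal (rel_entropy (\<lambda>x. u x t) (\<alpha> t) + L2norm_sq01 (\<lambda>x. v x t - (LBINT y:{0..1}. v0 y)))
        \<le> ennreal (2 * K)" using EV by (simp add: ennreal_leI)
    hence "ennreal (rel_entropy (\<lambda>x. u x t) (\<alpha> t) + L2norm_sq01 (\<lambda>x. v x t - (LBINT y:{0..1}. v0 y)))
        + (\<integral>\<^sup>+\<tau>\<in>{0..t}. (\<integral>\<^sup>+x\<in>{0..1}. ennreal ((deriv (\<lambda>y. u y \<tau>) x)\<^sup>2 / u x \<tau>) \<partial>lborel) \<partial>lborel)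
        \<le> ennreal (2 * K) + ennreal K" using NN by (rule add_mono)
    also have "\<dots> = ennreal (3 * K)" using K0 by (simp add: ennreal_plus[symmetric])
    also have "\<dots> \<le> ennreal (3 * K + 1)" by (rule ennreal_leI) simp
    finally show "ennreal (rel_entropy (\<lambda>x. u x t) (\<alpha> t) + L2norm_sq01 (\<lambda>x. v x t - (LBINT y:{0..1}. v0 y)))
        + (\<integral>\<^sup>+\<tau>\<in>{0..t}. (\<integral>\<^sup>+x\<in>{0..1}. ennreal ((deriv (\<lambda>y. u y \<tau>) x)\<^sup>2 / u x \<tau>) \<partial>lborel) \<partial>lborel)
        \<le> ennreal (3 * K + 1)" .
  qed
qed

end
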